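(* For any finite alphabet $A$ and any $u\in A^*$: $h({\uparrow}u)=|u|$, and $h(I(\{u\}))=h({\uparrow}u\cup{\downarrow}u)$, which equals $|u|$ if $|A|\geq2$ and $0$ otherwise.
   Context: $u\sqsubseteq v$ (subword) means $u=a_1\cdots a_n$ with letters $a_i$ and $v=v_0a_1v_1\cdots a_nv_n$ for some words $v_i$. ${\uparrow}u=\{v\in A^*~|~u\sqsubseteq v\}$, ${\downarrow}u=\{v\in A^*~|~v\sqsubseteq u\}$. $u\perp v$ means $u\not\sqsubseteq v$ and $v\not\sqsubseteq u$, and $I(L)=\{w\in A^*~|~\exists v\in L: w\perp v\}$. $u\sim_n v$ iff $u,v$ have the same subwords of length at most $n$; $L$ is $n$-PT if it is a union of $\sim_n$-classes, and $h(L)$ is the least such $n$. *)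

theory Defs
  imports Main "HOL-Library.Sublist"
begin

definition up_closure :: "'a set \<Rightarrow> 'a list \<Rightarrow> 'a list set" where
  "up_closure A u = {v \<in> lists A. subseq u v}"

definition down_closure :: "'a list \<Rightarrow> 'a list set" where
  "down_closure u = {v. subseq v u}"

definition incomparable :: "'a list \<Rightarrow> 'a list \<Rightarrow> bool" where
  "incomparable u v \<longleftrightarrow> \<not> subseq u v \<and> \<not> subseq v u"

definition incomp_set :: "'a set \<Rightarrow> 'a list set \<Rightarrow> 'a list set" where
  "incomp_set A L = {w \<in> lists A. \<exists>v\<in>L. incomparable w v}"

definition simon_eq :: "nat \<Rightarrow> 'a list \<Rightarrow> 'a list \<Rightarrow> bool" where
  "simon_eq n u v \<longleftrightarrow>
     {w. subseq w u \<and> length w \<le> n} = {w. subseq w v \<and> length w \<le> n}"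

definition n_PT :: "'a set \<Rightarrow> nat \<Rightarrow> 'a list set \<Rightarrow> bool" where
  "n_PT A n L \<longleftrightarrow>
     L \<subseteq> lists A \<and>
     (\<forall>u\<in>lists A. \<forall>v\<in>lists A. simon_eq n u v \<longrightarrow> (u \<in> L \<longleftrightarrow> v \<in> L))"

definition PT_height :: "'a set \<Rightarrow> 'a list set \<Rightarrow> nat" where
  "PT_height A L = (LEAST n. n_PT A n L)"

end

theory Submission
  imports Defs
begin

fun ff :: "('a \<Rightarrow> 'a list) \<Rightarrow> 'a list \<Rightarrow> 'a list" where
  "ff ys [] = []"
| "ff ys [a] = ys a @ ys a"
| "ff ys (a#b#u) = ys a @ a # ff ys (b#u)"

lemma skip_block:
  assumes "a \<notin> set y" "subseq (a#u) (y @ r)" shows "subseq (a#u) r"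
  using assms by (induction y) (auto split: if_splits)

lemma ff_not_sub:
  shows "(\<And>a. a \<notin> set (ys a)) \<Longrightarrow> u \<noteq> [] \<Longrightarrow> \<not> subseq u (ff ys u)"
proof (induction ys u rule: ff.induct)
  case (2 ys a)
  then show ?case by (simp add: subseq_singleton_left)
next
  case (3 ys a b u)
  show ?case
  proof
    assume "subseq (a#b#u) (ff ys (a#b#u))"
    hence "subseq (a#b#u) (a # ff ys (b#u))"
      using skip_block[of a "ys a" "b#u" "a # ff ys (b#u)"] 3(2) by simp
    hence "subseq (b#u) (ff ys (b#u))" by simp
    with 3 show False by simp
  qed
qed simp

lemma put_in_block:
  assumes "c \<in> set y" "subseq z r" shows "subseq (c#z) (y @ r)"
proof -
  obtain p q where "y = p @ c # q" using assms(1) by (meson split_list)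
  moreover have "subseq (c#z) (c # q @ r)" using assms(2) by (simp add: subseq_drop_many)
  ultimately show ?thesis by (simp add: subseq_drop_many)
qed

lemma ff_cover:
  shows "(\<And>a. A - {a} \<subseteq> set (ys a)) \<Longrightarrow> u \<noteq> [] \<Longrightarrow> z \<in> lists A \<Longrightarrow> length z \<le> length u - 1 \<Longrightarrow> subseq z (ff ys u)"
proof (induction ys u arbitrary: z rule: ff.induct)
  case (3 ys a b u)
  show ?case
  proof (cases z)
    case (Cons c z')
    have IH: "subseq z' (ff ys (b#u))" using 3 Cons by simp
    show ?thesis
    proof (cases "c = a")
      case True then show ?thesis using IH Cons by (simp add: subseq_drop_many)
    next
      case False
      hence "c \<in> set (ys a)" using 3(2) 3(4) Cons by auto
      moreover have "subseq z' (a # ff ys (b#u))" using IH subseq_drop_many[of z' _ "[a]"] by simp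
      ultimately show ?thesis using put_in_block[of c "ys a" z' "a # ff ys (b#u)"] Cons by simp
    qed
  qed simp
qed simp_all

lemma ff_set:
  shows "(\<And>a. a \<in> A \<Longrightarrow> set (ys a) \<subseteq> A) \<Longrightarrow> u \<in> lists A \<Longrightarrow> ff ys u \<in> lists A"
  by (induction ys u rule: ff.induct) auto

lemma ff_length:
  shows "(\<And>a. a \<in> set u \<Longrightarrow> ys a \<noteq> []) \<Longrightarrow> length (ff ys u) \<ge> 2 * length u"
proof (induction ys u rule: ff.induct)
  case (2 ys a) then show ?case by (cases "ys a") auto
next
  case (3 ys a b u)
  hence "ys a \<noteq> []" "2 * length (b#u) \<le> length (ff ys (b#u))" by auto
  then show ?case by (cases "ys a") auto
qed simp

lemma simon_sub: "simon_eq n x y \<Longrightarrow> subseq z x \<Longrightarrow> length z \<le> n \<Longrightarrow> subseq z y"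
  unfolding simon_eq_def by blast

lemma simon_sym: "simon_eq n x y \<Longrightarrow> simon_eq n y x"
  unfolding simon_eq_def by simp

lemma simon_cover:
  assumes "x \<in> lists A" "y \<in> lists A"
    "\<And>z. z \<in> lists A \<Longrightarrow> length z \<le> m \<Longrightarrow> subseq z x \<and> subseq z y"
  shows "simon_eq m x y"
  unfolding simon_eq_def
proof (intro set_eqI iffI; clarsimp)
  fix z assume "subseq z x" "length z \<le> m"
  hence "z \<in> lists A" using assms(1) by (auto elim: list_emb_set)
  then show "subseq z y" using assms(3) \<open>length z \<le> m\<close> by blast
next
  fix z assume "subseq z y" "length z \<le> m"
  hence "z \<in> lists A" using assms(2) by (auto elim: list_emb_set)
  then show "subseq z x" using assms(3) \<open>length z \<le> m\<close> by blast
qed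

lemma height_eq:
  assumes "n_PT A n L" "\<And>m. m < n \<Longrightarrow> \<not> n_PT A m L"
  shows "PT_height A L = n"
  unfolding PT_height_def
  by (rule Least_equality) (use assms in \<open>auto simp: not_less[symmetric]\<close>)

lemma not_PT:
  assumes "v \<in> lists A" "w \<in> lists A" "simon_eq m v w" "v \<in> L" "w \<notin> L"
  shows "\<not> n_PT A m L"
  using assms unfolding n_PT_def by blast

lemma union_PT:
  assumes "u \<in> lists A"
  shows "n_PT A (length u) (up_closure A u \<union> down_closure u)"
proof -
  have sub: "down_closure u \<subseteq> lists A" using assms unfolding down_closure_def
    by (auto elim: list_emb_set)
  have key: "subseq u w \<or> subseq w u"
    if s: "simon_eq (length u) v w" and h: "subseq u v \<or> subseq v u" for v w
  proof (cases "subseq u v")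
    case True then show ?thesis using simon_sub[OF s] by blast
  next
    case False
    hence vu: "subseq v u" using h by blast
    show ?thesis
    proof (cases "length w \<le> length u")
      case True
      hence "subseq w v" using simon_sub[OF simon_sym[OF s], of w] by simp
      then show ?thesis using vu subseq_order.trans by blast
    next
      case False
      have "subseq (take (length u) w) w" by (rule prefix_imp_subseq) (rule take_is_prefix)
      hence "subseq (take (length u) w) v" using simon_sub[OF simon_sym[OF s]] by simp
      hence "length u \<le> length v" using False list_emb_length by fastforce
      hence "v = u" using vu subseq_same_length list_emb_length by (metis le_antisym)
      then show ?thesis using simon_sub[OF s, of u] by simp
    qed
  qed
  show ?thesis unfolding n_PT_def
  proof (intro conjI ballI impI)
    show "up_closure A u \<union> down_closure u \<subseteq> lists A" using sub unfolding up_closure_def by auto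
  next
    fix v w assume "v \<in> lists A" "w \<in> lists A" "simon_eq (length u) v w"
    then show "(v \<in> up_closure A u \<union> down_closure u) = (w \<in> up_closure A u \<union> down_closure u)"
      using key[of v w] key[of w v] simon_sym unfolding up_closure_def down_closure_def by blast
  qed
qed

lemma up_PT:
  assumes "u \<in> lists A"
  shows "n_PT A (length u) (up_closure A u)"
  unfolding n_PT_def up_closure_def
  using simon_sub simon_sym by blast

lemma compl_PT:
  assumes "X \<subseteq> lists A"
  shows "n_PT A k (lists A - X) = n_PT A k X"
  using assms unfolding n_PT_def by blast

lemma one_comp:
  assumes "\<And>x y. x \<in> A \<Longrightarrow> y \<in> A \<Longrightarrow> x = y" "v \<in> lists A" "w \<in> lists A"
    "length v \<le> length w"
  shows "subseq v w"
proof -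
  have "v = take (length v) w"
  proof (rule nth_equalityI)
    fix i assume "i < length v"
    then show "v ! i = take (length v) w ! i"
      using assms by (simp add: in_listsD)
  qed (use assms in simp)
  then show ?thesis by (metis prefix_imp_subseq take_is_prefix)
qed

theorem proposition8:
  fixes A :: "'a set" and u :: "'a list"
  assumes "finite A" and "u \<in> lists A"
  shows "PT_height A (up_closure A u) = length u
    \<and> PT_height A (incomp_set A {u}) = PT_height A (up_closure A u \<union> down_closure u)
    \<and> PT_height A (up_closure A u \<union> down_closure u) = (if card A \<ge> 2 then length u else 0)"
proof -
  obtain L where L: "set L = A" using assms(1) finite_list by blast
  define ys where "ys = (\<lambda>a. filter (\<lambda>x. x \<noteq> a) L)"
  have ys1: "\<And>a. a \<notin> set (ys a)" and ys2: "\<And>a. A - {a} \<subseteq> set (ys a)"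
    and ys3: "\<And>a. a \<in> A \<Longrightarrow> set (ys a) \<subseteq> A"
    unfolding ys_def using L by auto
  define w where "w = ff ys u"
  define v where "v = w @ u"
  have wA: "w \<in> lists A" unfolding w_def using ff_set[of A ys u] ys3 assms(2) by blast
  have vA: "v \<in> lists A" unfolding v_def using wA assms(2) by simp
  have uv: "subseq u v" unfolding v_def by (simp add: subseq_drop_many)
  have sim: "simon_eq m v w" if "m < length u" for m
  proof (rule simon_cover[OF vA wA])
    fix z assume "z \<in> lists A" "length z \<le> m"
    hence "subseq z w" unfolding w_def using ff_cover[of A ys u z] ys2 that by fastforce
    then show "subseq z v \<and> subseq z w" unfolding v_def by (simp add: subseq_rev_drop_many)
  qed
  have nuw: "u \<noteq> [] \<Longrightarrow> \<not> subseq u w" unfolding w_def using ff_not_sub[of ys u] ys1 by blast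
  have D: "down_closure u \<subseteq> lists A" using assms(2) unfolding down_closure_def
    by (auto elim: list_emb_set)
  have UD: "up_closure A u \<union> down_closure u \<subseteq> lists A" using D unfolding up_closure_def by auto
  have c1: "PT_height A (up_closure A u) = length u"
  proof (rule height_eq[OF up_PT[OF assms(2)]])
    fix m assume "m < length u"
    hence "u \<noteq> []" by auto
    then show "\<not> n_PT A m (up_closure A u)"
      using not_PT[OF vA wA sim[OF \<open>m < length u\<close>], of "up_closure A u"] uv nuw vA
      unfolding up_closure_def by blast
  qed
  have inc: "incomp_set A {u} = lists A - (up_closure A u \<union> down_closure u)"
    unfolding incomp_set_def incomparable_def up_closure_def down_closure_def by auto
  have c2: "PT_height A (incomp_set A {u}) = PT_height A (up_closure A u \<union> down_closure u)"
    unfolding inc PT_height_def compl_PT[OF UD] ..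
  have c3: "PT_height A (up_closure A u \<union> down_closure u) = (if card A \<ge> 2 then length u else 0)"
  proof (cases "card A \<ge> 2")
    case True
    have ne: "ys a \<noteq> []" if "a \<in> set u" for a
    proof -
      have aA: "a \<in> A" using that assms(2) by auto
      have "card (A - {a}) \<ge> 1" using True aA assms(1) by simp
      hence "A - {a} \<noteq> {}" by (metis card.empty not_one_le_zero)
      then show ?thesis using ys2[of a] by auto
    qed
    have "length w \<ge> 2 * length u" unfolding w_def by (rule ff_length) (use ne in auto)
    hence nwu: "u \<noteq> [] \<Longrightarrow> \<not> subseq w u" using list_emb_length
      by (metis le_trans length_greater_0_conv mult_le_cancel2 not_less numeral_le_one_iff
          one_le_numeral semiring_norm(69) mult_1)
    have "PT_height A (up_closure A u \<union> down_closure u) = length u"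
    proof (rule height_eq[OF union_PT[OF assms(2)]])
      fix m assume "m < length u"
      hence "u \<noteq> []" by auto
      then show "\<not> n_PT A m (up_closure A u \<union> down_closure u)"
        using not_PT[OF vA wA sim[OF \<open>m < length u\<close>], of "up_closure A u \<union> down_closure u"] uv nuw nwu vA
        unfolding up_closure_def down_closure_def by blast
    qed
    then show ?thesis using True by simp
  next
    case False
    have one: "x = y" if "x \<in> A" "y \<in> A" for x y
    proof (rule ccontr)
      assume "x \<noteq> y"
      hence "card {x, y} \<le> card A" using that assms(1) by (intro card_mono) auto
      then show False using False \<open>x \<noteq> y\<close> by simp
    qed
    have all: "up_closure A u \<union> down_closure u = lists A"
    proof
      show "lists A \<subseteq> up_closure A u \<union> down_closure u"
      proof
        fix x assume x: "x \<in> lists A"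
        show "x \<in> up_closure A u \<union> down_closure u"
        proof (cases "length u \<le> length x")
          case True then show ?thesis using one_comp[OF _ assms(2) x] one x unfolding up_closure_def by blast
        next
          case False then show ?thesis using one_comp[OF _ x assms(2)] one unfolding down_closure_def by fastforce
        qed
      qed
    qed (rule UD)
    have "n_PT A 0 (lists A)" unfolding n_PT_def by auto
    hence "PT_height A (lists A) = 0" unfolding PT_height_def by (rule Least_equality) simp
    then show ?thesis using False all by simp
  qed
  show ?thesis using c1 c2 c3 by blast
qed

end
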